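(* Let $G=(V,E)$ be a digraph and let $p(x,y,z)$ be a polymorphism of $G^{\bot\top}$ such that $p(x,y,y)=x$ for all vertices $x,y$. Then, with neighbourhoods taken in $G^{\bot\top}$: (1) $a^+\subseteq p(a,b,c)^+$ for all $a,b,c\in V\cup\{\bot\}$; (2) $a^-\subseteq p(a,b,c)^-$ for all $a,b,c\in V\cup\{\top\}$; (3) if $G$ is nondismantlable, then $p(a,b,c)=a$ for all $a,b,c\in V$.
   Context: Digraphs are finite and loopless. $G^\bot$ is the digraph on $V\cup\{\bot\}$ with edges $E\cup\{(\bot,v):v\in V\}$; $G^{\bot\top}$ is the digraph on $V\cup\{\bot,\top\}$ obtained from $G^\bot$ by adding $\top$ and all edges $(v,\top)$ for $v\in V\cup\{\bot\}$. For a vertex $x$ of a digraph, $x^+$ is the set of out-neighbours and $x^-$ the set of in-neighbours. $G$ is nondismantlable if for all $v,w\in V$, $v^+\subseteq w^+$ and $v^-\subseteq w^-$ (in $G$) imply $v=w$. A ternary polymorphism of a digraph $(W,F)$ is a map $f:W^3\to W$ with $(f(a_1,a_2,a_3),f(b_1,b_2,b_3))\in F$ whenever all $(a_i,b_i)\in F$. *)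

theory Defs
  imports Main
begin

definition digraph :: "'a set \<Rightarrow> ('a \<times> 'a) set \<Rightarrow> bool" where
  "digraph V E \<longleftrightarrow> finite V \<and> E \<subseteq> V \<times> V \<and> (\<forall>v. (v, v) \<notin> E)"

datatype 'a ext = Bot | Top | Vtx 'a

definition vert_bt :: "'a set \<Rightarrow> 'a ext set" where
  "vert_bt V = Vtx ` V \<union> {Bot, Top}"

definition edges_bt :: "'a set \<Rightarrow> ('a \<times> 'a) set \<Rightarrow> ('a ext \<times> 'a ext) set" where
  "edges_bt V E =
     {(Vtx u, Vtx v) | u v. (u, v) \<in> E}
   \<union> {(Bot, Vtx v) | v. v \<in> V}
   \<union> {(x, Top) | x. x \<in> Vtx ` V \<union> {Bot}}"

definition out_nbrs :: "('b \<times> 'b) set \<Rightarrow> 'b \<Rightarrow> 'b set" where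
  "out_nbrs F x = {y. (x, y) \<in> F}"

definition in_nbrs :: "('b \<times> 'b) set \<Rightarrow> 'b \<Rightarrow> 'b set" where
  "in_nbrs F x = {y. (y, x) \<in> F}"

definition ternary_polymorphism :: "'b set \<Rightarrow> ('b \<times> 'b) set \<Rightarrow> ('b \<Rightarrow> 'b \<Rightarrow> 'b \<Rightarrow> 'b) \<Rightarrow> bool" where
  "ternary_polymorphism W F f \<longleftrightarrow>
     (\<forall>a1\<in>W. \<forall>a2\<in>W. \<forall>a3\<in>W. f a1 a2 a3 \<in> W) \<and>
     (\<forall>a1 a2 a3 b1 b2 b3. (a1, b1) \<in> F \<and> (a2, b2) \<in> F \<and> (a3, b3) \<in> F
        \<longrightarrow> (f a1 a2 a3, f b1 b2 b3) \<in> F)"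

definition nondismantlable :: "'a set \<Rightarrow> ('a \<times> 'a) set \<Rightarrow> bool" where
  "nondismantlable V E \<longleftrightarrow>
     (\<forall>v\<in>V. \<forall>w\<in>V. out_nbrs E v \<subseteq> out_nbrs E w \<and> in_nbrs E v \<subseteq> in_nbrs E w \<longrightarrow> v = w)"

end

theory Submission
  imports Defs
begin

theorem lemma5p2:
  fixes V :: "'a set" and E :: "('a \<times> 'a) set"
    and p :: "'a ext \<Rightarrow> 'a ext \<Rightarrow> 'a ext \<Rightarrow> 'a ext"
  assumes G: "digraph V E"
    and pol: "ternary_polymorphism (vert_bt V) (edges_bt V E) p"
    and maj: "\<forall>x\<in>vert_bt V. \<forall>y\<in>vert_bt V. p x y y = x"
  shows "(\<forall>a\<in>Vtx ` V \<union> {Bot}. \<forall>b\<in>Vtx ` V \<union> {Bot}. \<forall>c\<in>Vtx ` V \<union> {Bot}.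
            out_nbrs (edges_bt V E) a \<subseteq> out_nbrs (edges_bt V E) (p a b c))
       \<and> (\<forall>a\<in>Vtx ` V \<union> {Top}. \<forall>b\<in>Vtx ` V \<union> {Top}. \<forall>c\<in>Vtx ` V \<union> {Top}.
            in_nbrs (edges_bt V E) a \<subseteq> in_nbrs (edges_bt V E) (p a b c))
       \<and> (nondismantlable V E \<longrightarrow>
            (\<forall>a\<in>V. \<forall>b\<in>V. \<forall>c\<in>V. p (Vtx a) (Vtx b) (Vtx c) = Vtx a))"
proof -
  let ?F = "edges_bt V E"
  have EV: "E \<subseteq> V \<times> V" using G by (simp add: digraph_def)
  have Fsub: "(x, y) \<in> ?F \<Longrightarrow> x \<in> vert_bt V \<and> y \<in> vert_bt V" for x y
    using EV by (auto simp: edges_bt_def vert_bt_def)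
  have hom: "\<And>a1 a2 a3 b1 b2 b3. (a1, b1) \<in> ?F \<Longrightarrow> (a2, b2) \<in> ?F \<Longrightarrow> (a3, b3) \<in> ?F
        \<Longrightarrow> (p a1 a2 a3, p b1 b2 b3) \<in> ?F"
    using pol unfolding ternary_polymorphism_def by blast
  have clos: "\<And>a1 a2 a3. a1 \<in> vert_bt V \<Longrightarrow> a2 \<in> vert_bt V \<Longrightarrow> a3 \<in> vert_bt V \<Longrightarrow> p a1 a2 a3 \<in> vert_bt V"
    using pol unfolding ternary_polymorphism_def by blast
  have toTop: "x \<in> Vtx ` V \<union> {Bot} \<Longrightarrow> (x, Top) \<in> ?F" for x
    by (auto simp: edges_bt_def)
  have fromBot: "x \<in> Vtx ` V \<union> {Top} \<Longrightarrow> (Bot, x) \<in> ?F" for x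
    by (auto simp: edges_bt_def)
  have P1: "\<forall>a\<in>Vtx ` V \<union> {Bot}. \<forall>b\<in>Vtx ` V \<union> {Bot}. \<forall>c\<in>Vtx ` V \<union> {Bot}.
            out_nbrs ?F a \<subseteq> out_nbrs ?F (p a b c)"
  proof (intro ballI subsetI)
    fix a b c y assume a: "a \<in> Vtx ` V \<union> {Bot}" and b: "b \<in> Vtx ` V \<union> {Bot}"
      and c: "c \<in> Vtx ` V \<union> {Bot}" and y: "y \<in> out_nbrs ?F a"
    have ay: "(a, y) \<in> ?F" using y by (simp add: out_nbrs_def)
    have "(p a b c, p y Top Top) \<in> ?F" using hom[OF ay toTop[OF b] toTop[OF c]] .
    moreover have "p y Top Top = y" using maj Fsub[OF ay] by (auto simp: vert_bt_def)
    ultimately show "y \<in> out_nbrs ?F (p a b c)" by (simp add: out_nbrs_def)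
  qed
  have P2: "\<forall>a\<in>Vtx ` V \<union> {Top}. \<forall>b\<in>Vtx ` V \<union> {Top}. \<forall>c\<in>Vtx ` V \<union> {Top}.
            in_nbrs ?F a \<subseteq> in_nbrs ?F (p a b c)"
  proof (intro ballI subsetI)
    fix a b c y assume a: "a \<in> Vtx ` V \<union> {Top}" and b: "b \<in> Vtx ` V \<union> {Top}"
      and c: "c \<in> Vtx ` V \<union> {Top}" and y: "y \<in> in_nbrs ?F a"
    have ay: "(y, a) \<in> ?F" using y by (simp add: in_nbrs_def)
    have "(p y Bot Bot, p a b c) \<in> ?F" using hom[OF ay fromBot[OF b] fromBot[OF c]] .
    moreover have "p y Bot Bot = y" using maj Fsub[OF ay] by (auto simp: vert_bt_def)
    ultimately show "y \<in> in_nbrs ?F (p a b c)" by (simp add: in_nbrs_def)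
  qed
  have P3: "nondismantlable V E \<longrightarrow> (\<forall>a\<in>V. \<forall>b\<in>V. \<forall>c\<in>V. p (Vtx a) (Vtx b) (Vtx c) = Vtx a)"
  proof (intro impI ballI)
    fix a b c assume nd: "nondismantlable V E" and a: "a \<in> V" and b: "b \<in> V" and c: "c \<in> V"
    let ?q = "p (Vtx a) (Vtx b) (Vtx c)"
    have o: "out_nbrs ?F (Vtx a) \<subseteq> out_nbrs ?F ?q" using P1 a b c by blast
    have i: "in_nbrs ?F (Vtx a) \<subseteq> in_nbrs ?F ?q" using P2 a b c by blast
    have "?q \<in> vert_bt V" using clos a b c by (simp add: vert_bt_def)
    moreover have "(?q, Top) \<in> ?F" using o toTop[of "Vtx a"] a by (auto simp: out_nbrs_def)
    moreover have "(Bot, ?q) \<in> ?F" using i fromBot[of "Vtx a"] a by (auto simp: in_nbrs_def)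
    ultimately obtain w where w: "w \<in> V" "?q = Vtx w"
      by (auto simp: vert_bt_def edges_bt_def)
    have "out_nbrs E a \<subseteq> out_nbrs E w"
    proof
      fix u assume "u \<in> out_nbrs E a"
      hence "(Vtx a, Vtx u) \<in> ?F" by (auto simp: out_nbrs_def edges_bt_def)
      hence "(Vtx w, Vtx u) \<in> ?F" using o w by (auto simp: out_nbrs_def)
      thus "u \<in> out_nbrs E w" by (auto simp: out_nbrs_def edges_bt_def)
    qed
    moreover have "in_nbrs E a \<subseteq> in_nbrs E w"
    proof
      fix u assume "u \<in> in_nbrs E a"
      hence "(Vtx u, Vtx a) \<in> ?F" by (auto simp: in_nbrs_def edges_bt_def)
      hence "(Vtx u, Vtx w) \<in> ?F" using i w by (auto simp: in_nbrs_def)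
      thus "u \<in> in_nbrs E w" by (auto simp: in_nbrs_def edges_bt_def)
    qed
    ultimately have "a = w" using nd a w(1) unfolding nondismantlable_def by blast
    thus "?q = Vtx a" using w by simp
  qed
  show ?thesis using P1 P2 P3 by blast
qed

end
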